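(* Let $\mathbf{G}\in\mathbb{F}_2^{m\times n}$ be a triorthogonal matrix with linearly independent rows, written (after row permutation) as $\mathbf{G}=\begin{bmatrix}\mathbf{G}_1\\ \mathbf{G}_0\end{bmatrix}$, where $\mathbf{G}_1\in\mathbb{F}_2^{k\times n}$ consists of the odd-weight rows and $\mathbf{G}_0$ of the even-weight rows of $\mathbf{G}$. Let $\mathcal{Q}^T=\mathrm{CSS}(\mathcal{C}_1,\mathcal{C}_2)$ be the associated triorthogonal code, where $\mathcal{C}_1$ is the binary code generated by $\mathbf{G}$ and $\mathcal{C}_2$ is the dual of the code generated by $\mathbf{G}_0$. Then $\mathcal{Q}^T$ is CZ-transversal: for all $\bm{\psi},\bm{\phi}\in\mathbb{F}_2^k$, $$\mathbf{CZ}^{\otimes n}\big(|\bm{\psi}\rangle_L\otimes|\bm{\phi}\rangle_L\big)=(-1)^{\bm{\psi}\cdot\bm{\phi}}\,|\bm{\psi}\rangle_L\otimes|\bm{\phi}\rangle_L,$$ where $\mathbf{CZ}^{\otimes n}$ applies a physical controlled-$Z$ gate between qubit $i$ of the first block and qubit $i$ of the second block for every $i=1,\dots,n$; i.e., transversal CZ implements the logical CZ between corresponding logical qubits of the two code blocks.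
   Context: A binary matrix $\mathbf{G}=[G_{ij}]\in\mathbb{F}_2^{m\times n}$ is triorthogonal if $\sum_{i=1}^n G_{ai}G_{bi}=0 \pmod 2$ for all rows $a\neq b$, and $\sum_{i=1}^n G_{ai}G_{bi}G_{ci}=0\pmod 2$ for all distinct rows $a,b,c$. For binary linear codes $\mathcal{C}_1,\mathcal{C}_2\subseteq\mathbb{F}_2^n$ with $\mathcal{C}_2^\perp\subset\mathcal{C}_1$, the CSS code $\mathrm{CSS}(\mathcal{C}_1,\mathcal{C}_2)$ is the span of the logical basis states $|\bm{\psi}\rangle_L=|\mathcal{C}_2^\perp|^{-1/2}\sum_{\mathbf{y}\in\mathcal{C}_2^\perp}|\bm{\psi}\mathbf{A}+\mathbf{y}\rangle$, $\bm{\psi}\in\mathbb{F}_2^k$, where $\mathbf{A}\in\mathbb{F}_2^{k\times n}$ is a full-rank mapping matrix whose rows represent a basis of $\mathcal{C}_1/\mathcal{C}_2^\perp$. For the triorthogonal code $\mathcal{Q}^T$ the mapping matrix is $\mathbf{A}=\mathbf{G}_1$, and $k$ equals the number of rows of $\mathbf{G}_1$. The $\mathbf{CZ}$ gate is $\mathrm{diag}(1,1,1,-1)$. *)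

theory Defs
  imports Complex_Main "HOL-Library.Z2"
begin

text \<open>A binary m x n matrix is a function nat => nat => bit; only entries with
  row index < m and column index < n are relevant.\<close>

definition vecs :: "nat \<Rightarrow> (nat \<Rightarrow> bit) set" where
  "vecs n = {x. \<forall>j\<ge>n. x j = 0}"

definition dotp :: "nat \<Rightarrow> (nat \<Rightarrow> bit) \<Rightarrow> (nat \<Rightarrow> bit) \<Rightarrow> bit" where
  "dotp n x y = (\<Sum>j<n. x j * y j)"

text \<open>Row vector times matrix: psi A, where A consists of rows r0..<r1 of G,
  psi indexed by 0..<(r1-r0).\<close>
definition vecmat :: "nat \<Rightarrow> nat \<Rightarrow> nat \<Rightarrow> (nat \<Rightarrow> nat \<Rightarrow> bit) \<Rightarrow> (nat \<Rightarrow> bit) \<Rightarrow> (nat \<Rightarrow> bit)" where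
  "vecmat n r0 r1 G c = (\<lambda>j. if j < n then (\<Sum>i\<in>{r0..<r1}. c (i - r0) * G i j) else 0)"

definition rowspan :: "nat \<Rightarrow> nat \<Rightarrow> nat \<Rightarrow> (nat \<Rightarrow> nat \<Rightarrow> bit) \<Rightarrow> (nat \<Rightarrow> bit) set" where
  "rowspan n r0 r1 G = {vecmat n r0 r1 G c | c. c \<in> vecs (r1 - r0)}"

definition dual_code :: "nat \<Rightarrow> (nat \<Rightarrow> bit) set \<Rightarrow> (nat \<Rightarrow> bit) set" where
  "dual_code n C = {x \<in> vecs n. \<forall>y\<in>C. dotp n x y = 0}"

definition weight :: "nat \<Rightarrow> (nat \<Rightarrow> bit) \<Rightarrow> nat" where
  "weight n x = card {j. j < n \<and> x j \<noteq> 0}"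

definition triorthogonal :: "nat \<Rightarrow> nat \<Rightarrow> (nat \<Rightarrow> nat \<Rightarrow> bit) \<Rightarrow> bool" where
  "triorthogonal m n G \<longleftrightarrow>
     (\<forall>a<m. \<forall>b<m. a \<noteq> b \<longrightarrow> (\<Sum>i<n. G a i * G b i) = 0) \<and>
     (\<forall>a<m. \<forall>b<m. \<forall>c<m. a \<noteq> b \<and> a \<noteq> c \<and> b \<noteq> c \<longrightarrow>
        (\<Sum>i<n. G a i * G b i * G c i) = 0)"

definition rows_lin_indep :: "nat \<Rightarrow> nat \<Rightarrow> (nat \<Rightarrow> nat \<Rightarrow> bit) \<Rightarrow> bool" where
  "rows_lin_indep m n G \<longleftrightarrow>
     (\<forall>c. (\<forall>j<n. (\<Sum>i<m. c i * G i j) = 0) \<longrightarrow> (\<forall>i<m. c i = 0))"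

text \<open>An n-qubit state: amplitude function on computational basis labels
  (elements of vecs n; amplitudes outside are zero for the states considered).\<close>
type_synonym state = "(nat \<Rightarrow> bit) \<Rightarrow> complex"
type_synonym state2 = "((nat \<Rightarrow> bit) \<times> (nat \<Rightarrow> bit)) \<Rightarrow> complex"

definition logical_state :: "nat \<Rightarrow> nat \<Rightarrow> nat \<Rightarrow> (nat \<Rightarrow> nat \<Rightarrow> bit) \<Rightarrow> (nat \<Rightarrow> bit) set \<Rightarrow> (nat \<Rightarrow> bit) \<Rightarrow> state" where
  "logical_state n r0 r1 A C2perp psi =
     (\<lambda>x. (1 / csqrt (of_nat (card C2perp))) *
          (\<Sum>y\<in>C2perp. if (\<lambda>j. vecmat n r0 r1 A psi j + y j) = x then 1 else 0))"

definition tensor :: "state \<Rightarrow> state \<Rightarrow> state2" where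
  "tensor s t = (\<lambda>(x, y). s x * t y)"

definition sign :: "bit \<Rightarrow> complex" where
  "sign b = (if b = 0 then 1 else -1)"

text \<open>Transversal CZ: CZ between qubit i of block 1 and qubit i of block 2, i = 0..<n;
  diagonal in the computational basis with phase (-1)^(x . y).\<close>
definition CZ_transversal :: "nat \<Rightarrow> state2 \<Rightarrow> state2" where
  "CZ_transversal n S = (\<lambda>(x, y). sign (dotp n x y) * S (x, y))"

end

theory Submission
  imports Defs
begin

declare add_bit_eq_xor[simp del] mult_bit_eq_and[simp del]

lemma bit_sq: "(x::bit) * x = x" by (cases x) simp_all

lemma sum_bit_card: "(\<Sum>j<(n::nat). (x j::bit)) = of_nat (card {j. j < n \<and> x j \<noteq> 0})"
proof -
  have "(\<Sum>j<n. x j) = (\<Sum>j\<in>{j. j < n \<and> x j \<noteq> 0}. x j)"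
    by (intro sum.mono_neutral_right) auto
  also have "\<dots> = (\<Sum>j\<in>{j. j < n \<and> x j \<noteq> 0}. 1)" by (rule sum.cong) auto
  finally show ?thesis by simp
qed

lemma of_nat_bit: "(of_nat w :: bit) = (if even w then 0 else 1)"
  by (metis bit.exhaust even_of_nat even_zero odd_one)

definition Gd :: "nat \<Rightarrow> (nat \<Rightarrow> nat \<Rightarrow> bit) \<Rightarrow> nat \<Rightarrow> nat \<Rightarrow> bit" where
  "Gd n G i i' = (\<Sum>j<n. G i j * G i' j)"

lemma Gd_self: "Gd n G i i = (if even (weight n (G i)) then 0 else 1)"
  by (simp add: Gd_def bit_sq sum_bit_card weight_def of_nat_bit)

lemma dotp_add_left: "dotp n (\<lambda>j. a j + b j) c = dotp n a c + dotp n b c"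
  by (simp add: dotp_def distrib_right sum.distrib)

lemma dotp_comm: "dotp n a b = dotp n b a"
  by (simp add: dotp_def mult.commute)

lemma dotp_vecmat:
  "dotp n (vecmat n r0 r1 G c) (vecmat n s0 s1 G d) =
   (\<Sum>i\<in>{r0..<r1}. \<Sum>i'\<in>{s0..<s1}. c (i - r0) * d (i' - s0) * Gd n G i i')"
proof -
  have "dotp n (vecmat n r0 r1 G c) (vecmat n s0 s1 G d) =
     (\<Sum>j<n. (\<Sum>i\<in>{r0..<r1}. c (i - r0) * G i j) * (\<Sum>i'\<in>{s0..<s1}. d (i' - s0) * G i' j))"
    unfolding dotp_def vecmat_def by (rule sum.cong) auto
  also have "\<dots> = (\<Sum>j<n. \<Sum>i\<in>{r0..<r1}. \<Sum>i'\<in>{s0..<s1}. c (i - r0) * d (i' - s0) * (G i j * G i' j))"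
    by (simp add: sum_product mult_ac)
  also have "\<dots> = (\<Sum>i\<in>{r0..<r1}. \<Sum>j<n. \<Sum>i'\<in>{s0..<s1}. c (i - r0) * d (i' - s0) * (G i j * G i' j))"
    by (rule sum.swap)
  also have "\<dots> = (\<Sum>i\<in>{r0..<r1}. \<Sum>i'\<in>{s0..<s1}. \<Sum>j<n. c (i - r0) * d (i' - s0) * (G i j * G i' j))"
    by (rule sum.cong, simp, rule sum.swap)
  also have "\<dots> = (\<Sum>i\<in>{r0..<r1}. \<Sum>i'\<in>{s0..<s1}. c (i - r0) * d (i' - s0) * Gd n G i i')"
    by (simp add: Gd_def sum_distrib_left)
  finally show ?thesis .
qed

lemma vecmat_vecs: "vecmat n r0 r1 G c \<in> vecs n"
  by (simp add: vecmat_def vecs_def)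

theorem theorem1:
  fixes m n k :: nat and G :: "nat \<Rightarrow> nat \<Rightarrow> bit"
  assumes tri: "triorthogonal m n G"
    and indep: "rows_lin_indep m n G"
    and km: "k \<le> m"
    and odd_rows: "\<forall>a<k. odd (weight n (G a))"
    and even_rows: "\<forall>a. k \<le> a \<and> a < m \<longrightarrow> even (weight n (G a))"
  defines "C1 \<equiv> rowspan n 0 m G"
    and "C2 \<equiv> dual_code n (rowspan n k m G)"
  shows "\<forall>psi\<in>vecs k. \<forall>phi\<in>vecs k.
           CZ_transversal n (tensor (logical_state n 0 k G (dual_code n C2) psi)
                                    (logical_state n 0 k G (dual_code n C2) phi))
         = (\<lambda>z. sign (dotp k psi phi) *
                tensor (logical_state n 0 k G (dual_code n C2) psi)
                       (logical_state n 0 k G (dual_code n C2) phi) z)"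
proof (intro ballI)
  fix psi phi assume psi: "psi \<in> vecs k" and phi: "phi \<in> vecs k"
  define R where "R = rowspan n k m G"
  define D where "D = dual_code n C2"
  have Gd0: "Gd n G i i' = 0" if "i < m" "i' < m" "i \<noteq> i'" for i i'
    using tri that unfolding triorthogonal_def Gd_def by blast
  have R_C2: "R \<subseteq> C2"
  proof
    fix r assume "r \<in> R"
    then obtain c where r: "r = vecmat n k m G c" unfolding R_def rowspan_def by blast
    have "dotp n r y = 0" if "y \<in> R" for y
    proof -
      obtain d where y: "y = vecmat n k m G d" using \<open>y \<in> R\<close> unfolding R_def rowspan_def by blast
      show ?thesis unfolding r y dotp_vecmat
      proof (intro sum.neutral ballI)
        fix i i' assume "i \<in> {k..<m}" "i' \<in> {k..<m}"
        then have "Gd n G i i' = 0"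
          by (cases "i = i'") (auto simp: Gd0 Gd_self even_rows)
        then show "c (i - k) * d (i' - k) * Gd n G i i' = 0" by simp
      qed
    qed
    then show "r \<in> C2" unfolding C2_def dual_code_def R_def[symmetric] r
      by (simp add: vecmat_vecs)
  qed
  have D_C2: "D \<subseteq> C2"
    unfolding D_def using R_C2 unfolding C2_def dual_code_def R_def[symmetric] by blast
  have A_C2: "vecmat n 0 k G c \<in> C2" for c
  proof -
    have "dotp n (vecmat n 0 k G c) y = 0" if "y \<in> R" for y
    proof -
      obtain d where y: "y = vecmat n k m G d" using \<open>y \<in> R\<close> unfolding R_def rowspan_def by blast
      show ?thesis unfolding y dotp_vecmat
        using km by (intro sum.neutral ballI) (auto simp: Gd0)
    qed
    then show ?thesis unfolding C2_def dual_code_def R_def[symmetric]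
      by (simp add: vecmat_vecs)
  qed
  have AA: "dotp n (vecmat n 0 k G psi) (vecmat n 0 k G phi) = dotp k psi phi"
  proof -
    have "dotp n (vecmat n 0 k G psi) (vecmat n 0 k G phi) =
      (\<Sum>i\<in>{0..<k}. \<Sum>i'\<in>{0..<k}. if i' = i then psi i * phi i else 0)"
      unfolding dotp_vecmat
      using km by (intro sum.cong refl) (auto simp: Gd0 Gd_self odd_rows)
    also have "\<dots> = dotp k psi phi"
      by (simp add: dotp_def atLeast0LessThan)
    finally show ?thesis .
  qed
  have key: "dotp n x z = dotp k psi phi"
    if nz: "logical_state n 0 k G D psi x \<noteq> 0" "logical_state n 0 k G D phi z \<noteq> 0" for x z
  proof -
    have ex: "\<exists>y\<in>D. (\<lambda>j. vecmat n 0 k G c j + y j) = w"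
      if "logical_state n 0 k G D c w \<noteq> 0" for c w
    proof (rule ccontr)
      assume "\<not> ?thesis"
      then have "(\<Sum>y\<in>D. if (\<lambda>j. vecmat n 0 k G c j + y j) = w then (1::complex) else 0) = 0"
        by (intro sum.neutral) auto
      then show False using that unfolding logical_state_def by simp
    qed
    obtain y where y: "y \<in> D" "(\<lambda>j. vecmat n 0 k G psi j + y j) = x"
      using ex[OF nz(1)] by blast
    obtain y' where y': "y' \<in> D" "(\<lambda>j. vecmat n 0 k G phi j + y' j) = z"
      using ex[OF nz(2)] by blast
    have Dorth: "dotp n u v = 0" if "u \<in> D" "v \<in> C2" for u v
      using that unfolding D_def dual_code_def by blast
    define a where "a = vecmat n 0 k G psi"
    define b where "b = vecmat n 0 k G phi"
    have x: "x = (\<lambda>j. a j + y j)" using y(2) a_def by simp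
    have z: "z = (\<lambda>j. b j + y' j)" using y'(2) b_def by simp
    have e1: "dotp n x z = dotp n z a + dotp n z y"
      unfolding x dotp_add_left dotp_comm[of n a z] dotp_comm[of n y z] ..
    have e2: "dotp n z a = dotp n b a + dotp n y' a"
      unfolding z by (rule dotp_add_left)
    have e3: "dotp n z y = dotp n b y + dotp n y' y"
      unfolding z by (rule dotp_add_left)
    have z1: "dotp n y' a = 0" using Dorth y'(1) A_C2 a_def by blast
    have z2: "dotp n y' y = 0" using Dorth y'(1) y(1) D_C2 by blast
    have z3: "dotp n b y = 0" using Dorth[of y b] y(1) A_C2 b_def dotp_comm[of n b y] by simp
    have z4: "dotp n b a = dotp k psi phi" using AA dotp_comm[of n b a] a_def b_def by simp
    show ?thesis using e1 e2 e3 z1 z2 z3 z4 by simp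
  qed
  show "CZ_transversal n (tensor (logical_state n 0 k G (dual_code n C2) psi)
                                    (logical_state n 0 k G (dual_code n C2) phi))
         = (\<lambda>z. sign (dotp k psi phi) *
                tensor (logical_state n 0 k G (dual_code n C2) psi)
                       (logical_state n 0 k G (dual_code n C2) phi) z)"
    unfolding D_def[symmetric]
  proof (rule ext, clarify)
    fix x z
    show "CZ_transversal n (tensor (logical_state n 0 k G D psi) (logical_state n 0 k G D phi)) (x, z) =
      sign (dotp k psi phi) * tensor (logical_state n 0 k G D psi) (logical_state n 0 k G D phi) (x, z)"
      unfolding CZ_transversal_def tensor_def using key[of x z] by (cases "logical_state n 0 k G D phi z = 0"; cases "logical_state n 0 k G D psi x = 0") auto
  qed
qed

end
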